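(* For all $n\geq 0$, $$d_n=\sum_{k=0}^{n}(-1)^{(n-k)/2}d_{n,k}\,s_k,$$ where $d_{n,k}=\frac{k+1}{n+1}\binom{n+1}{\frac{n-k}{2}}$ if $n-k$ is even and $d_{n,k}=0$ if $n-k$ is odd (terms with $d_{n,k}=0$ are omitted). Moreover, for each $k\geq 0$, $\sum_{n\geq 0}d_{n,k}x^n=x^kC(x^2)^{k+1}$, where $C(x)=\frac{1-\sqrt{1-4x}}{2x}$.
   Context: Steps: $U=(1,1)$, $D=(1,-1)$, $H=(2,0)$. A Dyck path of length $2n$ is a lattice path from $(0,0)$ to $(2n,0)$ with steps $U,D$ never going below the $x$-axis; a Schröder path of length $2n$ is a lattice path from $(0,0)$ to $(2n,0)$ with steps $U,D,H$ never going below the $x$-axis. Such a path is symmetric if it has a vertex with $x$-coordinate $n$ and is invariant under reflection in the line $x=n$ (reversing the step sequence and interchanging $U$ and $D$ gives the same sequence). $d_n$ = number of symmetric Dyck paths of length $2n$, $s_n$ = number of symmetric Schröder paths of length $2n$. *)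

theory Defs
  imports Complex_Main
begin

datatype step = U | D | H

fun step_width :: "step \<Rightarrow> nat" where
  "step_width U = 1" | "step_width D = 1" | "step_width H = 2"

fun step_rise :: "step \<Rightarrow> int" where
  "step_rise U = 1" | "step_rise D = -1" | "step_rise H = 0"

definition width :: "step list \<Rightarrow> nat" where
  "width p = sum_list (map step_width p)"

definition height :: "step list \<Rightarrow> int" where
  "height p = sum_list (map step_rise p)"

definition schroder_path :: "nat \<Rightarrow> step list \<Rightarrow> bool" where
  "schroder_path n p \<longleftrightarrow> width p = 2 * n \<and> height p = 0 \<and>
     (\<forall>i \<le> length p. height (take i p) \<ge> 0)"

definition dyck_path :: "nat \<Rightarrow> step list \<Rightarrow> bool" where
  "dyck_path n p \<longleftrightarrow> schroder_path n p \<and> set p \<subseteq> {U, D}"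

fun flip :: "step \<Rightarrow> step" where
  "flip U = D" | "flip D = U" | "flip H = H"

definition symmetric_path :: "nat \<Rightarrow> step list \<Rightarrow> bool" where
  "symmetric_path n p \<longleftrightarrow> (\<exists>i \<le> length p. width (take i p) = n) \<and> rev (map flip p) = p"

definition d :: "nat \<Rightarrow> nat" where
  "d n = card {p. dyck_path n p \<and> symmetric_path n p}"

definition s :: "nat \<Rightarrow> nat" where
  "s n = card {p. schroder_path n p \<and> symmetric_path n p}"

definition dnk :: "nat \<Rightarrow> nat \<Rightarrow> real" where
  "dnk n k = (if k \<le> n \<and> even (n - k)
              then (real k + 1) / (real n + 1) * real ((n + 1) choose ((n - k) div 2))
              else 0)"

text \<open>C(x) = (1 - sqrt(1-4x))/(2x), extended continuously by C(0) = 1.\<close>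
definition catC :: "real \<Rightarrow> real" where
  "catC x = (if x = 0 then 1 else (1 - sqrt (1 - 4 * x)) / (2 * x))"

end

theory Submission
  imports Defs
begin


fun ok :: "int \<Rightarrow> step list \<Rightarrow> bool" where
  "ok a [] = (a \<ge> 0)"
| "ok a (x # q) = (a \<ge> 0 \<and> ok (a + step_rise x) q)"

lemma width_Cons[simp]: "width (x # q) = step_width x + width q"
  by (simp add: width_def)
lemma width_Nil[simp]: "width [] = 0" by (simp add: width_def)
lemma height_Cons[simp]: "height (x # q) = step_rise x + height q"
  by (simp add: height_def)
lemma height_Nil[simp]: "height [] = 0" by (simp add: height_def)
lemma width_append[simp]: "width (p @ q) = width p + width q"
  by (simp add: width_def)
lemma height_append[simp]: "height (p @ q) = height p + height q"
  by (simp add: height_def)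
lemma flip_flip[simp]: "flip (flip x) = x" by (cases x) auto
lemma width_flip[simp]: "step_width (flip x) = step_width x" by (cases x) auto
lemma rise_flip[simp]: "step_rise (flip x) = - step_rise x" by (cases x) auto
lemma width_rev_flip[simp]: "width (rev (map flip q)) = width q"
  by (induction q) auto
lemma height_rev_flip[simp]: "height (rev (map flip q)) = - height q"
  by (induction q) auto
lemma width_ge_length: "width q \<ge> length q"
proof (induction q)
  case (Cons x q) then show ?case by (cases x) auto
qed simp

lemma width0: "width q = 0 \<longleftrightarrow> q = []"
  using width_ge_length[of q] by auto

lemma ok_nonneg: "ok a q \<Longrightarrow> a \<ge> 0" by (cases q) auto

lemma ok_append: "ok a (p @ q) \<longleftrightarrow> ok a p \<and> ok (a + height p) q"
  by (induction p arbitrary: a) (auto simp: ok_nonneg add.assoc)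

lemma ok_rev_flip: "ok (c + height q) (rev (map flip q)) \<longleftrightarrow> ok c q"
proof (induction q arbitrary: c)
  case Nil then show ?case by simp
next
  case (Cons x q)
  have "ok (c + height (x # q)) (rev (map flip (x # q)))
      \<longleftrightarrow> ok (c + step_rise x + height q) (rev (map flip q)) \<and> ok (c + step_rise x) [flip x]"
    by (simp add: ok_append algebra_simps)
  also have "\<dots> \<longleftrightarrow> ok (c + step_rise x) q \<and> c + step_rise x \<ge> 0 \<and> c \<ge> 0"
    using Cons.IH[of "c + step_rise x"] by simp
  also have "\<dots> \<longleftrightarrow> ok c (x # q)" using ok_nonneg by auto
  finally show ?case .
qed

lemma ok_take: "ok a p \<longleftrightarrow> (\<forall>i \<le> length p. a + height (take i p) \<ge> 0)"
proof (induction p arbitrary: a)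
  case Nil then show ?case by simp
next
  case (Cons x p)
  show ?case
  proof
    assume h: "ok a (x # p)"
    show "\<forall>i\<le>length (x # p). a + height (take i (x # p)) \<ge> 0"
    proof (intro allI impI)
      fix i assume "i \<le> length (x # p)"
      then show "a + height (take i (x # p)) \<ge> 0"
        using h Cons.IH[of "a + step_rise x"]
        by (cases i) (auto simp: algebra_simps)
    qed
  next
    assume h: "\<forall>i\<le>length (x # p). a + height (take i (x # p)) \<ge> 0"
    have "a \<ge> 0" using h[rule_format, of 0] by simp
    moreover have "\<forall>i\<le>length p. a + step_rise x + height (take i p) \<ge> 0"
    proof (intro allI impI)
      fix i assume "i \<le> length p"
      then show "a + step_rise x + height (take i p) \<ge> 0"
        using h[rule_format, of "Suc i"] by (simp add: algebra_simps)
    qed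
    ultimately show "ok a (x # p)" using Cons.IH by simp
  qed
qed

lemma schroder_ok: "schroder_path n p \<longleftrightarrow> width p = 2 * n \<and> height p = 0 \<and> ok 0 p"
  unfolding schroder_path_def using ok_take[of 0 p] by simp

fun genS :: "nat \<Rightarrow> int \<Rightarrow> step list list" where
  "genS 0 a = (if a < 0 then [] else [[]])"
| "genS (Suc 0) a = (if a < 0 then [] else map (Cons U) (genS 0 (a+1)) @ map (Cons D) (genS 0 (a-1)))"
| "genS (Suc (Suc m)) a = (if a < 0 then [] else map (Cons U) (genS (Suc m) (a+1))
      @ map (Cons D) (genS (Suc m) (a-1)) @ map (Cons H) (genS m a))"

fun genD :: "nat \<Rightarrow> int \<Rightarrow> step list list" where
  "genD 0 a = (if a < 0 then [] else [[]])"
| "genD (Suc n) a = (if a < 0 then [] else map (Cons U) (genD n (a+1)) @ map (Cons D) (genD n (a-1)))"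

lemma Cons_in_map[simp]: "x # r \<in> set (map (Cons y) A) \<longleftrightarrow> x = y \<and> r \<in> set A"
  by auto

lemma Nil_in_map[simp]: "[] \<notin> set (map (Cons y) A)"
  by auto

lemma Cons_in_image[simp]: "x # r \<in> Cons y ` A \<longleftrightarrow> x = y \<and> r \<in> A"
  by auto

lemma Nil_in_image[simp]: "[] \<notin> Cons y ` A"
  by auto

lemma distinct_genS: "distinct (genS m a)"
  by (induction m a rule: genS.induct) (auto simp: distinct_map)

lemma distinct_genD: "distinct (genD m a)"
  by (induction m a rule: genD.induct) (auto simp: distinct_map)

lemma set_genS: "set (genS m a) = {q. width q = m \<and> ok a q}"
proof (induction m a rule: genS.induct)
  case (1 a)
  then show ?case
    using width0 ok_nonneg by auto
next
  case (2 a)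
  show ?case
  proof (cases "a < 0")
    case True then show ?thesis by (auto dest: ok_nonneg)
  next
    case False
    have "q \<in> set (genS (Suc 0) a) \<longleftrightarrow> width q = Suc 0 \<and> ok a q" for q
    proof (cases q)
      case Nil then show ?thesis using False by auto
    next
      case (Cons x r) then show ?thesis using False
        by (cases x) (auto simp: width0)
    qed
    then show ?thesis by blast
  qed
next
  case (3 m a)
  show ?case
  proof (cases "a < 0")
    case True then show ?thesis by (auto dest: ok_nonneg)
  next
    case False
    have "q \<in> set (genS (Suc (Suc m)) a) \<longleftrightarrow> width q = Suc (Suc m) \<and> ok a q" for q
    proof (cases q)
      case Nil then show ?thesis using False by auto
    next
      case (Cons x r) then show ?thesis using False 3
        by (cases x) (simp_all add: ok_nonneg)
    qed
    then show ?thesis by blast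
  qed
qed

lemma set_genD: "set (genD m a) = {q. set q \<subseteq> {U, D} \<and> width q = m \<and> ok a q}"
proof (induction m a rule: genD.induct)
  case (1 a)
  then show ?case
    using width0 ok_nonneg by auto
next
  case (2 n a)
  show ?case
  proof (cases "a < 0")
    case True then show ?thesis by (auto dest: ok_nonneg)
  next
    case False
    have "q \<in> set (genD (Suc n) a) \<longleftrightarrow> set q \<subseteq> {U, D} \<and> width q = Suc n \<and> ok a q" for q
    proof (cases q)
      case Nil then show ?thesis using False by auto
    next
      case (Cons x r) then show ?thesis using False 2
        by (cases x) (simp_all add: ok_nonneg)
    qed
    then show ?thesis by blast
  qed
qed

definition mir :: "step list \<Rightarrow> step list" where
  "mir q = q @ rev (map flip q)"

lemma inj_mir: "inj mir"
proof (rule injI)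
  fix x y assume h: "mir x = mir y"
  then have "length x = length y" unfolding mir_def
    by (metis length_append length_map length_rev mult_2 nonzero_mult_div_cancel_left zero_neq_numeral)
  then show "x = y" using h unfolding mir_def by simp
qed

lemma width_take_mono:
  assumes "i < j" "j \<le> length p"
  shows "width (take i p) < width (take j p)"
proof -
  have "take j p = take i p @ take (j - i) (drop i p)"
    using assms by (metis le_add_diff_inverse less_imp_le_nat take_add)
  moreover have "length (take (j - i) (drop i p)) > 0" using assms by simp
  moreover have "0 < width (take (j - i) (drop i p))"
    using width_ge_length[of "take (j - i) (drop i p)"] \<open>length (take (j - i) (drop i p)) > 0\<close> by linarith
  ultimately show ?thesis by simp
qed

lemma width_take_inj:
  assumes "i \<le> length p" "j \<le> length p" "width (take i p) = width (take j p)"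
  shows "i = j"
  using width_take_mono[of i j p] width_take_mono[of j i p] assms
  by (metis less_irrefl_nat nat_neq_iff)

lemma mir_ok: "ok 0 (mir q) \<longleftrightarrow> ok 0 q"
  unfolding mir_def using ok_rev_flip[of 0 q] by (simp add: ok_append)

lemma sym_char:
  "(schroder_path n p \<and> symmetric_path n p) \<longleftrightarrow> (\<exists>q. width q = n \<and> ok 0 q \<and> p = mir q)"
proof
  assume h: "schroder_path n p \<and> symmetric_path n p"
  then obtain i where i: "i \<le> length p" "width (take i p) = n" and r: "rev (map flip p) = p"
    and w: "width p = 2 * n" and o: "ok 0 p"
    unfolding symmetric_path_def schroder_ok by blast
  define L where "L = length p"
  have "take i p = take i (rev (map flip p))" using r by simp
  also have "\<dots> = rev (map flip (drop (L - i) p))" by (simp add: take_rev L_def drop_map)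
  finally have "width (drop (L - i) p) = n" using i by (metis width_rev_flip)
  moreover have "width p = width (take (L - i) p) + width (drop (L - i) p)"
    by (metis width_append append_take_drop_id)
  ultimately have "width (take (L - i) p) = width (take i p)" using w i by simp
  then have Li: "L - i = i" using width_take_inj[of "L - i" p i] i L_def by simp
  define q where "q = take i p"
  have "drop i p = drop i (rev (map flip p))" using r by simp
  also have "\<dots> = rev (map flip q)" using Li by (simp add: drop_rev q_def L_def take_map)
  finally have "p = mir q" unfolding mir_def q_def by (metis append_take_drop_id)
  moreover have "width q = n" using i q_def by simp
  moreover have "ok 0 q" using o \<open>p = mir q\<close> mir_ok by simp
  ultimately show "\<exists>q. width q = n \<and> ok 0 q \<and> p = mir q" by blast
next
  assume "\<exists>q. width q = n \<and> ok 0 q \<and> p = mir q"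
  then obtain q where q: "width q = n" "ok 0 q" "p = mir q" by blast
  have "schroder_path n p" unfolding schroder_ok using q mir_ok by (simp add: mir_def)
  moreover have "symmetric_path n p" unfolding symmetric_path_def
  proof
    show "\<exists>i\<le>length p. width (take i p) = n"
      using q by (intro exI[of _ "length q"]) (simp add: mir_def)
    show "rev (map flip p) = p" using q by (simp add: mir_def rev_map comp_def)
  qed
  ultimately show "schroder_path n p \<and> symmetric_path n p" by blast
qed

lemma set_mir: "set (mir q) \<subseteq> {U, D} \<longleftrightarrow> set q \<subseteq> {U, D}"
proof -
  have "x \<in> {U, D} \<Longrightarrow> flip x \<in> {U, D}" for x by (cases x) auto
  then show ?thesis unfolding mir_def by auto
qed

lemma s_gen: "s n = length (genS n 0)"
proof -
  have "{p. schroder_path n p \<and> symmetric_path n p} = mir ` set (genS n 0)"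
    unfolding set_genS using sym_char by auto
  then show ?thesis unfolding s_def
    by (simp add: card_image[OF inj_on_subset[OF inj_mir subset_UNIV]] distinct_card distinct_genS)
qed

lemma d_gen: "d n = length (genD n 0)"
proof -
  have "{p. dyck_path n p \<and> symmetric_path n p} = mir ` set (genD n 0)"
  proof
    show "{p. dyck_path n p \<and> symmetric_path n p} \<subseteq> mir ` set (genD n 0)"
    proof
      fix p assume "p \<in> {p. dyck_path n p \<and> symmetric_path n p}"
      then have h: "schroder_path n p \<and> symmetric_path n p" "set p \<subseteq> {U, D}"
        unfolding dyck_path_def by auto
      then obtain q where "width q = n" "ok 0 q" "p = mir q" using sym_char by blast
      then show "p \<in> mir ` set (genD n 0)" using h(2) set_mir unfolding set_genD by auto
    qed
    show "mir ` set (genD n 0) \<subseteq> {p. dyck_path n p \<and> symmetric_path n p}"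
      unfolding set_genD dyck_path_def using sym_char set_mir by auto
  qed
  then show ?thesis unfolding d_def
    by (simp add: card_image[OF inj_on_subset[OF inj_mir subset_UNIV]] distinct_card distinct_genD)
qed




definition E :: "nat \<Rightarrow> int \<Rightarrow> real" where
  "E n m = (if m < 0 then 0 else real (n choose nat m))"

lemma nat_1_int[simp]: "nat (1 + int k) = Suc k" by simp
lemma nat_int_1[simp]: "nat (int k + 1) = Suc k" by simp

lemma E_pascal: "E (Suc n) m = E n m + E n (m - 1)"
proof (cases "m < 0")
  case True then show ?thesis by (simp add: E_def)
next
  case False
  show ?thesis
  proof (cases "m = 0")
    case True then show ?thesis by (simp add: E_def)
  next
    case False
    define k where "k = nat m - 1"
    have k: "m = int (Suc k)" using False \<open>\<not> m < 0\<close> unfolding k_def by simp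
    then have "nat (m - 1) = k" by simp
    then show ?thesis using k by (simp add: E_def)
  qed
qed

lemma dnk_zero: assumes "\<not> (k \<le> n \<and> even (n - k))" shows "dnk n k = 0"
  by (simp only: dnk_def if_not_P[OF assms])

lemma dnk_km: "dnk (k + 2 * m) k = E (k + 2 * m) (int m) - E (k + 2 * m) (int m - 1)"
proof (cases m)
  case 0
  then show ?thesis by (simp add: dnk_def E_def)
next
  case (Suc m')
  define n where "n = k + 2 * m"
  have n: "n = k + 2 * m' + 2" using Suc n_def by simp
  have dm: "(n - k) div 2 = Suc m'" using n by simp
  have "dnk n k = (real k + 1) / (real n + 1) * real (Suc n choose Suc m')"
    unfolding dnk_def using dm n by simp
  also have "real (Suc n choose Suc m') = real (Suc n) * real (n choose m') / real (Suc m')"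
    using Suc_times_binomial_eq[of n m'] by (simp add: field_simps flip: of_nat_mult)
  also have "(real k + 1) / (real n + 1) * (real (Suc n) * real (n choose m') / real (Suc m'))
     = (real k + 1) * real (n choose m') / real (Suc m')"
  proof -
    have "\<And>a b c e::real. b \<noteq> 0 \<Longrightarrow> a / b * (b * c / e) = a * c / e" by simp
    from this[of "real n + 1"] show ?thesis by (simp add: add.commute)
  qed
  finally have 1: "dnk n k = (real k + 1) * real (n choose m') / real (Suc m')" .
  have "real (Suc m') * real (n choose Suc m') = real (n - m') * real (n choose m')"
  proof -
    have "Suc m' * (n choose Suc m') = n * ((n - 1) choose m')"
      using times_binomial_minus1_eq[of "Suc m'" n] by simp
    also have "\<dots> = (n - m') * (n choose m')" using binomial_absorb_comp[of n m'] by simp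
    finally have "Suc m' * (n choose Suc m') = (n - m') * (n choose m')" .
    then show ?thesis by (metis of_nat_mult)
  qed
  then have 2: "real (n choose Suc m') = real (n - m') * real (n choose m') / real (Suc m')"
    by (simp add: field_simps)
  have 3: "real (n - m') = real k + real m' + 2" using n by simp
  have "E n (int m) - E n (int m - 1) = real (n choose Suc m') - real (n choose m')"
    using Suc by (simp add: E_def)
  also have "\<dots> = (real k + 1) * real (n choose m') / real (Suc m')"
    unfolding 2 3 by (simp add: field_simps)
  finally show ?thesis using 1 n_def by simp
qed

lemma E_neg: "m < 0 \<Longrightarrow> E n m = 0" by (simp add: E_def)

lemma dnk_R0: "dnk 0 k = (if k = 0 then 1 else 0)"
  by (simp add: dnk_def)

lemma dnk_R2: "dnk (Suc n) (Suc j) = dnk n j + dnk n (Suc (Suc j))"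
proof (cases "j \<le> n \<and> even (n - j)")
  case True
  define m where "m = (n - j) div 2"
  have n: "n = j + 2 * m" using True m_def by auto
  have "dnk (Suc n) (Suc j) = E (Suc n) (int m) - E (Suc n) (int m - 1)"
    using dnk_km[of "Suc j" m] n by simp
  also have "\<dots> = E n (int m) - E n (int m - 2)"
    by (simp add: E_pascal algebra_simps)
  finally have 1: "dnk (Suc n) (Suc j) = E n (int m) - E n (int m - 2)" .
  have 2: "dnk n j = E n (int m) - E n (int m - 1)" using dnk_km[of j m] n by simp
  have 3: "dnk n (Suc (Suc j)) = E n (int m - 1) - E n (int m - 2)"
  proof (cases m)
    case 0 then show ?thesis using n by (simp add: dnk_zero E_neg)
  next
    case (Suc m')
    then have "n = Suc (Suc j) + 2 * m'" using n by simp
    then show ?thesis using dnk_km[of "Suc (Suc j)" m'] Suc by (simp add: algebra_simps)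
  qed
  show ?thesis using 1 2 3 by simp
next
  case False
  then show ?thesis by (auto simp: dnk_zero)
qed

lemma dnk_R1: "dnk (Suc n) 0 = dnk n 1"
proof (cases "even (Suc n)")
  case True
  then have "odd n" by simp
  then obtain m' where n0: "n = 2 * m' + 1" by (rule oddE)
  then have n: "n = 1 + 2 * m'" by simp
  have "dnk (Suc n) 0 = E (Suc n) (int m' + 1) - E (Suc n) (int m')"
    using dnk_km[of 0 "Suc m'"] n by (simp add: ac_simps)
  also have "\<dots> = E n (int m' + 1) - E n (int m' - 1)"
    by (simp add: E_pascal algebra_simps)
  also have "E n (int m' + 1) = E n (int m')"
  proof -
    have "n choose Suc m' = n choose (n - Suc m')" using n by (intro binomial_symmetric) simp
    also have "n - Suc m' = m'" using n by simp
    finally show ?thesis unfolding E_def by (simp add: nat_add_distrib)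
  qed
  finally show ?thesis using dnk_km[of 1 m'] n by simp
next
  case False
  have 1: "\<not> (0 \<le> Suc n \<and> even (Suc n - 0))" using False by simp
  have 2: "\<not> (1 \<le> n \<and> even (n - 1))"
  proof
    assume "1 \<le> n \<and> even (n - 1)"
    then show False using False by (cases n) auto
  qed
  show ?thesis unfolding dnk_zero[OF 1] dnk_zero[OF 2] ..
qed

lemma dnk_nonneg: "dnk n k \<ge> 0" by (simp add: dnk_def)

lemma dnk_le: "dnk n k \<le> 2 ^ (n + 1)"
proof (cases "k \<le> n \<and> even (n - k)")
  case True
  have "dnk n k = (real k + 1) / (real n + 1) * real ((n + 1) choose ((n - k) div 2))"
    by (simp only: dnk_def if_P[OF True])
  also have "\<dots> \<le> 1 * real ((n + 1) choose ((n - k) div 2))"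
    using True by (intro mult_right_mono) auto
  also have "\<dots> \<le> 2 ^ (n + 1)"
  proof -
    have "real ((n + 1) choose ((n - k) div 2)) \<le> real ((2::nat) ^ (n + 1))"
      by (simp only: of_nat_le_iff binomial_le_pow2)
    then show ?thesis by simp
  qed
  finally show ?thesis .
next
  case False
  show ?thesis unfolding dnk_zero[OF False] by simp
qed

definition f :: "nat \<Rightarrow> nat \<Rightarrow> real" where
  "f n k = (-1) ^ ((n - k) div 2) * dnk n k"

lemma f_zero: "n < k \<Longrightarrow> f n k = 0" by (simp add: f_def dnk_zero)

lemma f_R0: "f 0 k = (if k = 0 then 1 else 0)" by (simp add: f_def dnk_R0)

lemma f_R2: "f (Suc n) (Suc j) = f n j - f n (Suc (Suc j))"
proof (cases "dnk n (Suc (Suc j)) = 0")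
  case True then show ?thesis by (simp add: f_def dnk_R2)
next
  case False
  then have "Suc (Suc j) \<le> n" using dnk_zero by blast
  then have "(n - j) div 2 = Suc ((n - Suc (Suc j)) div 2)" by (simp add: Suc_diff_le div_Suc)
  then show ?thesis by (simp add: f_def dnk_R2 algebra_simps)
qed

lemma f_R1: "f (Suc n) 0 = - f n 1"
proof (cases "dnk n 1 = 0")
  case True then show ?thesis by (simp add: f_def dnk_R1)
next
  case False
  then have "1 \<le> n" "even (n - 1)" using dnk_zero by blast+
  then have "odd n" by (cases n) auto
  then obtain b where "n = 2 * b + 1" by (rule oddE)
  then have "Suc n div 2 = Suc ((n - 1) div 2)" by simp
  then show ?thesis by (simp add: f_def dnk_R1)
qed




lemma sum_tail_zero:
  fixes M N :: nat
  assumes "\<And>k. M \<le> k \<Longrightarrow> g k = 0" "M \<le> N"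
  shows "sum g {..<N} = (sum g {..<M} :: real)"
proof (rule sum.mono_neutral_right)
  show "finite {..<N}" by simp
  show "{..<M} \<subseteq> {..<N}" using assms(2) by auto
  show "\<forall>i\<in>{..<N} - {..<M}. g i = 0" using assms(1) by auto
qed

lemma genS_neg: "a < 0 \<Longrightarrow> genS m a = []"
  by (cases "(m, a)" rule: genS.cases) auto

lemma genD_rec: "0 \<le> a \<Longrightarrow> length (genD (Suc n) a) = length (genD n (a + 1)) + length (genD n (a - 1))"
  by simp

lemma genS_rec: "0 \<le> a \<Longrightarrow> real (length (genS (Suc j) a)) - (if j = 0 then 0 else real (length (genS (j - 1) a)))
   = real (length (genS j (a + 1))) + real (length (genS j (a - 1)))"
  by (cases j) auto

lemma main_id:
  "\<forall>a N. n < N \<longrightarrow> real (length (genD n a)) = (\<Sum>k<N. f n k * real (length (genS k a)))"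
proof (induction n)
  case 0
  show ?case
  proof (intro allI impI)
    fix a and N :: nat assume "0 < N"
    then have "(\<Sum>k<N. f 0 k * real (length (genS k a))) = (\<Sum>k<1. f 0 k * real (length (genS k a)))"
      by (intro sum_tail_zero) (auto simp: f_R0)
    then show "real (length (genD 0 a)) = (\<Sum>k<N. f 0 k * real (length (genS k a)))"
      by (simp add: f_R0)
  qed
next
  case (Suc n)
  show ?case
  proof (intro allI impI)
    fix a and N :: nat assume N: "Suc n < N"
    show "real (length (genD (Suc n) a)) = (\<Sum>k<N. f (Suc n) k * real (length (genS k a)))"
    proof (cases "a < 0")
      case True then show ?thesis by (simp add: genS_neg)
    next
      case False
      then have a: "0 \<le> a" by simp
      obtain M where M: "N = Suc M" "n < M" using N by (cases N) auto
      define S where "S k = real (length (genS k a))" for k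
      define T where "T j = (if j = 0 then 0 else S (j - 1))" for j
      have "(\<Sum>k<N. f (Suc n) k * S k) = f (Suc n) 0 * S 0 + (\<Sum>i<M. f (Suc n) (Suc i) * S (Suc i))"
        unfolding M by (rule sum.lessThan_Suc_shift)
      also have "\<dots> = - f n 1 * S 0 + (\<Sum>i<M. f n i * S (Suc i)) - (\<Sum>i<M. f n (Suc (Suc i)) * S (Suc i))"
        by (simp add: f_R1 f_R2 algebra_simps sum_subtractf)
      also have "(\<Sum>i<M. f n (Suc (Suc i)) * S (Suc i)) = (\<Sum>j<Suc (Suc M). f n j * T j) - f n 1 * S 0"
        by (simp add: sum.lessThan_Suc_shift T_def del: sum.lessThan_Suc)
      also have "(\<Sum>j<Suc (Suc M). f n j * T j) = (\<Sum>j<M. f n j * T j)"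
        using M by (intro sum_tail_zero) (auto simp: f_zero)
      finally have "(\<Sum>k<N. f (Suc n) k * S k) = (\<Sum>i<M. f n i * (S (Suc i) - T i))"
        by (simp add: algebra_simps sum_subtractf)
      also have "\<dots> = (\<Sum>i<M. f n i * (real (length (genS i (a + 1))) + real (length (genS i (a - 1)))))"
        using genS_rec[OF a] unfolding S_def T_def by (intro sum.cong) auto
      also have "\<dots> = real (length (genD n (a + 1))) + real (length (genD n (a - 1)))"
        using Suc.IH M by (simp add: algebra_simps sum.distrib)
      also have "\<dots> = real (length (genD (Suc n) a))" using a by simp
      finally show ?thesis unfolding S_def by simp
    qed
  qed
qed

theorem part1: "real (d n) = (\<Sum>k = 0..n. (-1) ^ ((n - k) div 2) * dnk n k * real (s k))"
proof -
  have "real (length (genD n 0)) = (\<Sum>k<Suc n. f n k * real (length (genS k 0)))"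
    using main_id[of n] by blast
  then have "real (d n) = (\<Sum>k<Suc n. f n k * real (length (genS k 0)))"
    by (simp only: d_gen)
  also have "\<dots> = (\<Sum>k = 0..n. (-1) ^ ((n - k) div 2) * dnk n k * real (s k))"
    by (simp add: f_def s_gen atLeast0AtMost lessThan_Suc_atMost)
  finally show ?thesis .
qed




lemma catC_facts:
  assumes "0 \<le> y" "y < 1/4"
  shows "catC y = 1 + y * catC y ^ 2 \<and> 0 \<le> catC y \<and> catC y \<le> 2"
proof (cases "y = 0")
  case True then show ?thesis by (simp add: catC_def)
next
  case False
  then have y: "0 < y" using assms by simp
  define r where "r = sqrt (1 - 4 * y)"
  have r0: "0 \<le> r" using assms unfolding r_def by simp
  have r2: "r ^ 2 = 1 - 4 * y" using assms unfolding r_def by simp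
  have "catC y = (1 - r) / (2 * y)" using False unfolding catC_def r_def by simp
  also have "\<dots> = 2 / (1 + r)"
  proof -
    have "(1 - r) * (1 + r) = 4 * y" using r2 by (simp add: algebra_simps power2_eq_square)
    then show ?thesis using y r0 by (simp add: field_simps)
  qed
  finally have c: "catC y = 2 / (1 + r)" .
  have "1 + y * (2 / (1 + r)) ^ 2 = 2 / (1 + r)"
  proof -
    have p: "(1 + r) ^ 2 + 4 * y = 2 * (1 + r)" using r2 by (simp add: algebra_simps power2_eq_square)
    have "0 \<le> r * r + r * 2" using r0 by simp
    then have nz: "1 + (r * r + r * 2) \<noteq> 0" by linarith
    have "1 + y * (2 / (1 + r)) ^ 2 = ((1 + r) ^ 2 + 4 * y) / (1 + r) ^ 2"
      using nz by (simp add: field_simps power2_eq_square)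
    also have "\<dots> = 2 * (1 + r) / (1 + r) ^ 2" using p by simp
    also have "\<dots> = 2 / (1 + r)"
    proof -
      have "1 + r \<noteq> 0" using r0 by linarith
      have gen: "\<And>t::real. t \<noteq> 0 \<Longrightarrow> 2 * t / t^2 = 2 / t" by (simp add: power2_eq_square)
      show ?thesis by (rule gen[OF \<open>1 + r \<noteq> 0\<close>])
    qed
    finally show ?thesis .
  qed
  moreover have "2 / (1 + r) \<le> 2" using r0 by (simp add: field_simps)
  moreover have "0 \<le> 2 / (1 + r)" using r0 by simp
  ultimately show ?thesis using c by simp
qed

lemma dnk_abs: "\<bar>dnk n j * x ^ n\<bar> \<le> 2 * (2 * \<bar>x\<bar>) ^ n"
proof -
  have "\<bar>dnk n j * x ^ n\<bar> = dnk n j * \<bar>x\<bar> ^ n" using dnk_nonneg by (simp add: abs_mult power_abs)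
  also have "\<dots> \<le> 2 ^ (n + 1) * \<bar>x\<bar> ^ n" by (intro mult_right_mono dnk_le) simp
  also have "\<dots> = 2 * (2 * \<bar>x\<bar>) ^ n" by (simp add: power_mult_distrib)
  finally show ?thesis .
qed

lemma gen_summable:
  assumes "\<bar>x\<bar> < 1/2"
  shows "summable (\<lambda>n. dnk n j * x ^ n)"
proof (rule summable_comparison_test)
  show "\<exists>N. \<forall>n\<ge>N. norm (dnk n j * x ^ n) \<le> 2 * (2 * \<bar>x\<bar>) ^ n" using dnk_abs by auto
  show "summable (\<lambda>n. 2 * (2 * \<bar>x\<bar>) ^ n :: real)"
    using assms by (intro summable_mult summable_geometric) simp
qed

lemma aux3:
  fixes a b c :: real
  assumes "b \<le> 1/2 * (a + c)" "a \<le> b"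
  shows "b \<le> c"
  using assms by (simp add: field_simps)

lemma part2:
  fixes x :: real
  assumes x: "\<bar>x\<bar> < 1/2"
  shows "(\<lambda>n. dnk n k * x ^ n) sums (x ^ k * catC (x^2) ^ (k + 1))"
proof -
  define c where "c = catC (x^2)"
  have "x^2 < 1/4"
  proof -
    have "x^2 = \<bar>x\<bar>^2" by simp
    also have "\<dots> < (1/2)^2" using x by (intro power_strict_mono) auto
    also have "(1/2::real)^2 = 1/4" by (simp add: power2_eq_square)
    finally show ?thesis .
  qed
  then have cf: "c = 1 + x^2 * c^2" "0 \<le> c" "c \<le> 2" using catC_facts[of "x^2"] unfolding c_def by auto
  define G where "G j = suminf (\<lambda>n. dnk n j * x ^ n)" for j
  have GS: "(\<lambda>n. dnk n j * x ^ n) sums G j" for j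
    unfolding G_def using gen_summable[OF x] by (rule summable_sums)
  have G0: "G 0 = 1 + x * G 1"
  proof -
    have "(\<lambda>n. dnk (Suc n) 0 * x ^ Suc n) sums (G 0 - 1)"
      using GS[of 0] by (subst sums_Suc_iff) (simp add: dnk_R0)
    moreover have "(\<lambda>n. dnk (Suc n) 0 * x ^ Suc n) sums (x * G 1)"
      using sums_mult[OF GS[of 1], of x] by (simp add: dnk_R1 algebra_simps)
    ultimately show ?thesis using sums_unique2 by fastforce
  qed
  have GS2: "G (Suc j) = x * (G j + G (Suc (Suc j)))" for j
  proof -
    have "(\<lambda>n. dnk (Suc n) (Suc j) * x ^ Suc n) sums G (Suc j)"
      using GS[of "Suc j"] by (subst sums_Suc_iff) (simp add: dnk_R0)
    moreover have "(\<lambda>n. dnk (Suc n) (Suc j) * x ^ Suc n) sums (x * (G j + G (Suc (Suc j))))"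
      using sums_mult[OF sums_add[OF GS[of j] GS[of "Suc (Suc j)"]], of x]
      by (simp add: dnk_R2 algebra_simps)
    ultimately show ?thesis using sums_unique2 by fastforce
  qed
  have Gbound: "\<bar>G j\<bar> \<le> (2 * \<bar>x\<bar>) ^ j * (2 / (1 - 2 * \<bar>x\<bar>))" for j
  proof -
    have "(\<Sum>i<j. dnk i j * x ^ i) = 0" by (intro sum.neutral) (auto simp: dnk_zero)
    then have sh: "(\<lambda>i. dnk (i + j) j * x ^ (i + j)) sums G j"
      using sums_iff_shift[of "\<lambda>n. dnk n j * x ^ n" j "G j"] GS[of j] by simp
    have gsum: "(\<lambda>i. (2 * \<bar>x\<bar>) ^ j * 2 * (2 * \<bar>x\<bar>) ^ i) sums ((2 * \<bar>x\<bar>) ^ j * 2 * (1 / (1 - 2 * \<bar>x\<bar>)))"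
      using x by (intro sums_mult geometric_sums) simp
    have "\<bar>G j\<bar> = norm (suminf (\<lambda>i. dnk (i + j) j * x ^ (i + j)))" by (simp add: sums_unique[OF sh])
    also have "\<dots> \<le> suminf (\<lambda>i. (2 * \<bar>x\<bar>) ^ j * 2 * (2 * \<bar>x\<bar>) ^ i)"
    proof (rule norm_suminf_le)
      show "norm (dnk (i + j) j * x ^ (i + j)) \<le> (2 * \<bar>x\<bar>) ^ j * 2 * (2 * \<bar>x\<bar>) ^ i" for i
        using dnk_abs[of "i + j" j x] by (simp add: power_add algebra_simps)
      show "summable (\<lambda>i. (2 * \<bar>x\<bar>) ^ j * 2 * (2 * \<bar>x\<bar>) ^ i)" using gsum by (rule sums_summable)
    qed
    also have "\<dots> = (2 * \<bar>x\<bar>) ^ j * (2 / (1 - 2 * \<bar>x\<bar>))" using gsum sums_unique by fastforce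
    finally show ?thesis .
  qed
  have G_lim: "G \<longlonglongrightarrow> 0"
  proof -
    define B where "B j = (2 * \<bar>x\<bar>) ^ j * (2 / (1 - 2 * \<bar>x\<bar>))" for j
    have B: "B \<longlonglongrightarrow> 0"
      unfolding B_def using x by (intro tendsto_mult_left_zero LIMSEQ_power_zero) simp
    have "(\<lambda>j. - B j) \<longlonglongrightarrow> - 0" using B by (rule tendsto_minus)
    then have mB: "(\<lambda>j. - B j) \<longlonglongrightarrow> 0" by simp
    show ?thesis
    proof (rule tendsto_sandwich[OF _ _ mB B])
      show "\<forall>\<^sub>F j in sequentially. - B j \<le> G j"
      proof (intro always_eventually allI)
        fix j show "- B j \<le> G j" using Gbound[of j] unfolding B_def abs_le_iff by linarith
      qed
      show "\<forall>\<^sub>F j in sequentially. G j \<le> B j"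
      proof (intro always_eventually allI)
        fix j show "G j \<le> B j" using Gbound[of j] unfolding B_def abs_le_iff by linarith
      qed
    qed
  qed
  define e where "e j = G j - x ^ j * c ^ Suc j" for j
  have xc: "\<bar>x * c\<bar> < 1"
  proof -
    have "\<bar>x * c\<bar> = \<bar>x\<bar> * c" using cf by (simp add: abs_mult)
    also have "\<dots> \<le> \<bar>x\<bar> * 2" using cf by (intro mult_left_mono) auto
    finally show ?thesis using x by simp
  qed
  have P_lim: "(\<lambda>j. x ^ j * c ^ Suc j) \<longlonglongrightarrow> 0"
  proof -
    have "(\<lambda>j. (x * c) ^ j * c) \<longlonglongrightarrow> 0" using xc by (intro tendsto_mult_left_zero LIMSEQ_power_zero) simp
    then show ?thesis by (simp add: power_mult_distrib mult_ac)
  qed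
  have e_lim: "e \<longlonglongrightarrow> 0" unfolding e_def using tendsto_diff[OF G_lim P_lim] by simp
  have e0: "e 0 = x * e 1"
  proof -
    have "c = 1 + x * (x * c^2)" using cf by (simp add: power2_eq_square algebra_simps)
    then show ?thesis unfolding e_def using G0 by (simp add: algebra_simps power2_eq_square)
  qed
  have e2: "e (Suc j) = x * (e j + e (Suc (Suc j)))" for j
  proof -
    have id: "x ^ Suc j * c ^ Suc (Suc j) = x * (x ^ j * c ^ Suc j + x ^ Suc (Suc j) * c ^ Suc (Suc (Suc j)))"
    proof -
      have "x ^ Suc j * c ^ Suc (Suc j) = x ^ Suc j * c ^ Suc j * c" by simp
      also have "\<dots> = x ^ Suc j * c ^ Suc j * (1 + x^2 * c^2)"
        by (rule arg_cong[where f = "\<lambda>t. x ^ Suc j * c ^ Suc j * t"]) (rule cf(1))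
      also have "\<dots> = x * (x ^ j * c ^ Suc j + x ^ Suc (Suc j) * c ^ Suc (Suc (Suc j)))"
        by (simp only: power_Suc power2_eq_square) algebra
      finally show ?thesis .
    qed
    show ?thesis unfolding e_def GS2[of j] id by algebra
  qed
  have mono: "\<bar>e j\<bar> \<le> \<bar>e (Suc j)\<bar>" for j
  proof (induction j)
    case 0
    have "\<bar>e 0\<bar> = \<bar>x\<bar> * \<bar>e 1\<bar>" using e0 by (simp add: abs_mult)
    also have "\<dots> \<le> 1 * \<bar>e 1\<bar>" using x by (intro mult_right_mono) auto
    finally show ?case by simp
  next
    case (Suc j)
    have "\<bar>e (Suc j)\<bar> = \<bar>x\<bar> * \<bar>e j + e (Suc (Suc j))\<bar>" using e2[of j] by (simp add: abs_mult)
    also have "\<dots> \<le> \<bar>x\<bar> * (\<bar>e j\<bar> + \<bar>e (Suc (Suc j))\<bar>)" by (intro mult_left_mono abs_triangle_ineq) simp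
    also have "\<dots> \<le> (1/2) * (\<bar>e j\<bar> + \<bar>e (Suc (Suc j))\<bar>)" using x by (intro mult_right_mono) auto
    finally have h: "\<bar>e (Suc j)\<bar> \<le> 1/2 * (\<bar>e j\<bar> + \<bar>e (Suc (Suc j))\<bar>)" .
    show ?case using aux3[OF h Suc.IH] .
  qed
  have mono2: "\<bar>e j\<bar> \<le> \<bar>e (j + m)\<bar>" for j m
  proof (induction m)
    case (Suc m) then show ?case using mono[of "j + m"] by simp
  qed simp
  have "\<bar>e k\<bar> \<le> 0"
  proof (rule LIMSEQ_le_const)
    show "(\<lambda>n. \<bar>e n\<bar>) \<longlonglongrightarrow> 0" using tendsto_rabs[OF e_lim] by simp
    show "\<exists>N. \<forall>n\<ge>N. \<bar>e k\<bar> \<le> \<bar>e n\<bar>"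
      using mono2 by (metis le_add_diff_inverse)
  qed
  then have "G k = x ^ k * c ^ (k + 1)" unfolding e_def by simp
  then show ?thesis using GS[of k] unfolding c_def by simp
qed



theorem theorem3p4:
  shows "(\<forall>n. real (d n) = (\<Sum>k = 0..n. (-1) ^ ((n - k) div 2) * dnk n k * real (s k)))
       \<and> (\<forall>k (x::real). \<bar>x\<bar> < 1/2 \<longrightarrow>
            (\<lambda>n. dnk n k * x ^ n) sums (x ^ k * catC (x^2) ^ (k + 1)))"
  using part1 part2 by blast

end
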